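(* Let $(C,\mathfrak p,\mathfrak d)$ be a regular $q$-cycle coalgebra. Then $\mathfrak d_{10}^1=\mathfrak p_{10}^1=1$ or $\mathfrak d_{11}^1=\mathfrak p_{11}^1=0$.
   Context: $K$ is an algebraically closed field of characteristic $0$ and $n\ge2$. $C$ is the coalgebra dual to $K[y]/\langle y^n\rangle$: basis $x_0,\dots,x_{n-1}$, $\Delta(x_i)=\sum_{j+k=i}x_j\otimes x_k$, $\epsilon(x_i)=\delta_{i0}$; $C\otimes C$ has the tensor product coalgebra structure; Sweedler notation $\Delta(b)=b_{(1)}\otimes b_{(2)}$. For linear maps $\mathfrak p,\mathfrak d\colon C\otimes C\to C$ write $a\cdot b=\mathfrak p(a\otimes b)$, $a:b=\mathfrak d(a\otimes b)$, $\mathfrak p(x_i\otimes x_j)=\sum_{k=0}^{n-1}\mathfrak p_{ij}^kx_k$, $\mathfrak d(x_i\otimes x_j)=\sum_{k=0}^{n-1}\mathfrak d_{ij}^kx_k$. A triple $(C,\mathfrak p,\mathfrak d)$ with $\mathfrak p,\mathfrak d$ coalgebra morphisms is a regular $q$-magma coalgebra if there are coalgebra morphisms $a\otimes b\mapsto a^b$, $a\otimes b\mapsto a_b$ from $C\otimes C$ to $C$ with $a^{b_{(1)}}\cdot b_{(2)}=(a\cdot b_{(1)})^{b_{(2)}}=\epsilon(b)a$ and $(a:b_{(2)})_{b_{(1)}}=a_{b_{(2)}}:b_{(1)}=\epsilon(b)a$. It is a regular $q$-cycle coalgebra if moreover for all $a,b,c$: (1) $(a\cdot b_{(1)})\cdot(c:b_{(2)})=(a\cdot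 c_{(2)})\cdot(b\cdot c_{(1)})$; (2) $(a\cdot b_{(1)}):(c\cdot b_{(2)})=(a:c_{(2)})\cdot(b:c_{(1)})$; (3) $(a:b_{(1)}):(c:b_{(2)})=(a:c_{(2)}):(b\cdot c_{(1)})$. *)

theory Defs
  imports "HOL-Computational_Algebra.Polynomial"
begin

text \<open>
  C is the coalgebra with basis x_0, ..., x_(n-1), Delta(x_i) = sum_(j+k=i) x_j (x) x_k,
  eps(x_i) = delta_(i,0).  A linear map f : C (x) C -> C is encoded by its structure
  constants  f i j k  (coefficient of x_k in f(x_i (x) x_j)), only indices < n matter.
  All identities of linear maps below are checked on basis elements (equivalent by
  multilinearity).
\<close>

type_synonym 'a sc = "nat \<Rightarrow> nat \<Rightarrow> nat \<Rightarrow> 'a"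

definition alg_closed_field :: "'a::field itself \<Rightarrow> bool" where
  "alg_closed_field _ \<longleftrightarrow> (\<forall>q::'a poly. degree q > 0 \<longrightarrow> (\<exists>x. poly q x = 0))"

text \<open>f : C (x) C -> C is a coalgebra morphism (C (x) C with the tensor product coalgebra
  structure): eps o f = eps (x) eps and Delta o f = (f (x) f) o Delta_(C(x)C), where
  Delta_(C(x)C)(x_i (x) x_j) = sum_(a+b=i, c+d=j) (x_a (x) x_c) (x) (x_b (x) x_d).\<close>
definition coalg_morph :: "nat \<Rightarrow> ('a::field) sc \<Rightarrow> bool" where
  "coalg_morph n f \<longleftrightarrow>
     (\<forall>i<n. \<forall>j<n. f i j 0 = (if i = 0 \<and> j = 0 then 1 else 0)) \<and>
     (\<forall>i<n. \<forall>j<n. \<forall>k<n. \<forall>l<n.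
        (if k + l < n then f i j (k + l) else 0) =
        (\<Sum>a\<le>i. \<Sum>c\<le>j. f a c k * f (i - a) (j - c) l))"

text \<open>Regular q-magma coalgebra; u encodes a (x) b |-> a^b, v encodes a (x) b |-> a_b.
  With a = x_i, b = x_j, Delta(b) = sum_(s+t=j) x_s (x) x_t.\<close>
definition regular_q_magma :: "nat \<Rightarrow> ('a::field) sc \<Rightarrow> 'a sc \<Rightarrow> bool" where
  "regular_q_magma n p d \<longleftrightarrow> coalg_morph n p \<and> coalg_morph n d \<and>
     (\<exists>u v. coalg_morph n u \<and> coalg_morph n v \<and>
       (\<forall>i<n. \<forall>j<n. \<forall>k<n.
          (\<Sum>s\<le>j. \<Sum>m<n. u i s m * p m (j - s) k) = (if j = 0 \<and> i = k then 1 else 0) \<and>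
          (\<Sum>s\<le>j. \<Sum>m<n. p i s m * u m (j - s) k) = (if j = 0 \<and> i = k then 1 else 0) \<and>
          (\<Sum>s\<le>j. \<Sum>m<n. d i (j - s) m * v m s k) = (if j = 0 \<and> i = k then 1 else 0) \<and>
          (\<Sum>s\<le>j. \<Sum>m<n. v i (j - s) m * d m s k) = (if j = 0 \<and> i = k then 1 else 0)))"

text \<open>Regular q-cycle coalgebra: identities (1)-(3) on a = x_i, b = x_j, c = x_l,
  compared coefficientwise at x_k.\<close>
definition regular_q_cycle :: "nat \<Rightarrow> ('a::field) sc \<Rightarrow> 'a sc \<Rightarrow> bool" where
  "regular_q_cycle n p d \<longleftrightarrow> regular_q_magma n p d \<and>
     (\<forall>i<n. \<forall>j<n. \<forall>l<n. \<forall>k<n.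
        (\<Sum>s\<le>j. \<Sum>m<n. \<Sum>r<n. p i s m * d l (j - s) r * p m r k) =
        (\<Sum>s\<le>l. \<Sum>m<n. \<Sum>r<n. p i (l - s) m * p j s r * p m r k) \<and>
        (\<Sum>s\<le>j. \<Sum>m<n. \<Sum>r<n. p i s m * p l (j - s) r * d m r k) =
        (\<Sum>s\<le>l. \<Sum>m<n. \<Sum>r<n. d i (l - s) m * d j s r * p m r k) \<and>
        (\<Sum>s\<le>j. \<Sum>m<n. \<Sum>r<n. d i s m * d l (j - s) r * d m r k) =
        (\<Sum>s\<le>l. \<Sum>m<n. \<Sum>r<n. d i (l - s) m * p j s r * d m r k))"

end

theory Submission
  imports Defs
begin

lemma cm_eq:
  assumes "coalg_morph n f" "i<n" "j<n" "k<n" "l<n"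
  shows "(if k + l < n then f i j (k + l) else 0) =
        (\<Sum>a\<le>i. \<Sum>c\<le>j. f a c k * f (i - a) (j - c) l)"
  using assms unfolding coalg_morph_def by blast

lemma cm_0:
  assumes "coalg_morph n f" "i<n" "j<n"
  shows "f i j 0 = (if i = 0 \<and> j = 0 then 1 else 0)"
  using assms unfolding coalg_morph_def by blast

lemma cm_001:
  assumes cm: "coalg_morph n (f::('a::field) sc)" and n: "2 \<le> n"
  shows "f 0 0 1 = 0"
proof -
  have pw: "f 0 0 k = f 0 0 1 ^ k" if "k < n" for k
    using that
  proof (induction k)
    case 0
    then show ?case using cm_0[OF cm, of 0 0] by simp
  next
    case (Suc k)
    have "(if k + 1 < n then f 0 0 (k + 1) else 0) = f 0 0 k * f 0 0 1"
      using cm_eq[OF cm, of 0 0 k 1] Suc.prems n by simp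
    then show ?case using Suc by simp
  qed
  have "(if (n-1) + 1 < n then f 0 0 ((n-1) + 1) else 0) = f 0 0 (n-1) * f 0 0 1"
    using cm_eq[OF cm, of 0 0 "n-1" 1] n by simp
  then have "f 0 0 1 ^ (n-1) * f 0 0 1 = 0" using pw[of "n-1"] n by simp
  then have "f 0 0 1 ^ n = 0"
    by (metis Suc_diff_1 n le_less_trans less_2_cases_iff linorder_not_less power_Suc2 zero_less_Suc)
  then show ?thesis by simp
qed

lemma cm_van:
  assumes cm: "coalg_morph n (f::('a::field) sc)" and n: "2 \<le> n"
  shows "k < n \<Longrightarrow> i < n \<Longrightarrow> j < n \<Longrightarrow> i + j < k \<Longrightarrow> f i j k = 0"
proof (induction k arbitrary: i j)
  case 0
  then show ?case by simp
next
  case (Suc k)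
  have e: "f i j (k + 1) = (\<Sum>a\<le>i. \<Sum>c\<le>j. f a c k * f (i - a) (j - c) 1)"
    using cm_eq[OF cm, of i j k 1] Suc.prems n by simp
  have "f a c k * f (i - a) (j - c) 1 = 0" if "a \<le> i" "c \<le> j" for a c
  proof (cases "a + c < k")
    case True
    then show ?thesis using Suc.IH[of a c] Suc.prems that by simp
  next
    case False
    then have "a = i" "c = j" using that Suc.prems by auto
    then show ?thesis using cm_001[OF cm n] by simp
  qed
  then have "(\<Sum>a\<le>i. \<Sum>c\<le>j. f a c k * f (i - a) (j - c) 1) = 0"
    by (intro sum.neutral ballI) simp
  then show ?case using e by simp
qed

lemma sum_one_pt:
  assumes "finite A" "x \<in> A" "\<And>a. a \<in> A \<Longrightarrow> a \<noteq> x \<Longrightarrow> g a = 0"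
  shows "sum g A = g x"
proof -
  have "sum g A = g x + sum g (A - {x})" using assms by (simp add: sum.remove)
  moreover have "sum g (A - {x}) = 0" using assms by (intro sum.neutral) auto
  ultimately show ?thesis by simp
qed

lemma sum_two_pt:
  assumes "finite A" "x \<in> A" "y \<in> A" "x \<noteq> y"
    "\<And>a. a \<in> A \<Longrightarrow> a \<noteq> x \<Longrightarrow> a \<noteq> y \<Longrightarrow> g a = 0"
  shows "sum g A = g x + g y"
proof -
  have "sum g A = g x + sum g (A - {x})" using assms by (simp add: sum.remove)
  moreover have "sum g (A - {x}) = g y" using assms by (intro sum_one_pt) auto
  ultimately show ?thesis by simp
qed

lemma cm_step:
  assumes cm: "coalg_morph n (f::('a::field) sc)" and n: "2 \<le> n"
    and m: "Suc m < n"
    and h1: "f (Suc m) 0 (Suc m) = f 1 0 1 ^ Suc m"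
    and h2: "f m 1 (Suc m) = of_nat (Suc m) * f 1 0 1 ^ m * f 0 1 1"
  shows "(\<Sum>a\<le>Suc m. \<Sum>c\<le>1. f a c (Suc m) * f (Suc m - a) (1 - c) 1)
     = of_nat (Suc (Suc m)) * f 1 0 1 ^ Suc m * f 0 1 1"
proof -
  note van = cm_van[OF cm n]
  have z: "f 0 0 1 = 0" using cm_001[OF cm n] .
  have "(\<Sum>a\<le>Suc m. \<Sum>c\<le>1. f a c (Suc m) * f (Suc m - a) (1 - c) 1)
     = (\<Sum>c\<le>1. f (Suc m) c (Suc m) * f (Suc m - Suc m) (1 - c) 1)
     + (\<Sum>c\<le>1. f m c (Suc m) * f (Suc m - m) (1 - c) 1)"
  proof (rule sum_two_pt)
    fix a assume a: "a \<in> {..Suc m}" "a \<noteq> Suc m" "a \<noteq> m"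
    then have "a < m" by auto
    then show "(\<Sum>c\<le>1. f a c (Suc m) * f (Suc m - a) (1 - c) 1) = 0"
      using van[of "Suc m" a 0] van[of "Suc m" a 1] m by simp
  qed auto
  also have "\<dots> = f 1 0 1 ^ Suc m * f 0 1 1 + of_nat (Suc m) * f 1 0 1 ^ m * f 0 1 1 * f 1 0 1"
    using z van[of "Suc m" m 0] m h1 h2 by simp
  also have "\<dots> = of_nat (Suc (Suc m)) * f 1 0 1 ^ Suc m * f 0 1 1"
    by (simp add: algebra_simps)
  finally show ?thesis .
qed

lemma cm_beta:
  assumes cm: "coalg_morph n (f::('a::field_char_0) sc)" and n: "2 \<le> n"
    and al: "f 1 0 1 \<noteq> 0"
  shows "f 0 1 1 = 0"
proof -
  note van = cm_van[OF cm n]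
  have z: "f 0 0 1 = 0" using cm_001[OF cm n] .
  have P: "f (Suc m) 0 (Suc m) = f 1 0 1 ^ Suc m \<and>
           f m 1 (Suc m) = of_nat (Suc m) * f 1 0 1 ^ m * f 0 1 1" if "Suc m < n" for m
    using that
  proof (induction m)
    case 0
    then show ?case by simp
  next
    case (Suc m)
    then have IH: "f (Suc m) 0 (Suc m) = f 1 0 1 ^ Suc m"
        "f m 1 (Suc m) = of_nat (Suc m) * f 1 0 1 ^ m * f 0 1 1" by auto
    have e1: "f (Suc (Suc m)) 0 (Suc (Suc m)) =
      (\<Sum>a\<le>Suc (Suc m). \<Sum>c\<le>0. f a c (Suc m) * f (Suc (Suc m) - a) (0 - c) 1)"
      using cm_eq[OF cm, of "Suc (Suc m)" 0 "Suc m" 1] Suc.prems n by simp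
    also have "\<dots> = (\<Sum>c\<le>0. f (Suc m) c (Suc m) * f (Suc (Suc m) - Suc m) (0 - c) 1)"
    proof (rule sum_one_pt)
      fix a assume a: "a \<in> {..Suc (Suc m)}" "a \<noteq> Suc m"
      show "(\<Sum>c\<le>0. f a c (Suc m) * f (Suc (Suc m) - a) (0 - c) 1) = 0"
      proof (cases "a < Suc m")
        case True
        then show ?thesis using van[of "Suc m" a 0] Suc.prems by simp
      next
        case False
        then have "a = Suc (Suc m)" using a by auto
        then show ?thesis using z by simp
      qed
    qed auto
    also have "\<dots> = f 1 0 1 ^ Suc (Suc m)" using IH by simp
    finally have r1: "f (Suc (Suc m)) 0 (Suc (Suc m)) = f 1 0 1 ^ Suc (Suc m)" .
    have "f (Suc m) 1 (Suc (Suc m)) =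
      (\<Sum>a\<le>Suc m. \<Sum>c\<le>1. f a c (Suc m) * f (Suc m - a) (1 - c) 1)"
      using cm_eq[OF cm, of "Suc m" 1 "Suc m" 1] Suc.prems n by simp
    also have "\<dots> = of_nat (Suc (Suc m)) * f 1 0 1 ^ Suc m * f 0 1 1"
      using cm_step[OF cm n _ IH] Suc.prems by simp
    finally show ?case using r1 by simp
  qed
  obtain m where m: "n = Suc (Suc m)" using n by (metis add_2_eq_Suc le_Suc_ex)
  have "0 = (\<Sum>a\<le>Suc m. \<Sum>c\<le>1. f a c (Suc m) * f (Suc m - a) (1 - c) 1)"
    using cm_eq[OF cm, of "Suc m" 1 "Suc m" 1] m by simp
  also have "\<dots> = of_nat (Suc (Suc m)) * f 1 0 1 ^ Suc m * f 0 1 1"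
    using cm_step[OF cm n _ conjunct1[OF P] conjunct2[OF P]] m by simp
  finally have "of_nat (Suc (Suc m)) * f 1 0 1 ^ Suc m * f 0 1 1 = 0" by simp
  moreover have "(of_nat (Suc (Suc m)) :: 'a) \<noteq> 0" by (rule of_nat_neq_0)
  ultimately show ?thesis using al by (metis mult_eq_0_iff power_not_zero)
qed

lemma sum_lt2:
  assumes "2 \<le> (n::nat)" "\<And>m. 2 \<le> m \<Longrightarrow> m < n \<Longrightarrow> g m = 0"
  shows "(\<Sum>m<n. g m) = g 0 + g 1"
  using assms by (intro sum_two_pt) auto

lemma cm_Z:
  assumes cm: "coalg_morph n (f::('a::field_char_0) sc)" and n: "2 \<le> n"
    and al: "f 1 0 1 \<noteq> 0"
    and i: "i \<le> 1" and j: "j \<le> 1" and m: "2 \<le> m" "m < n"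
  shows "f i j m = 0"
proof (cases "m = 2 \<and> i = 1 \<and> j = 1")
  case True
  have "(if 1 + 1 < n then f 1 1 (1 + 1) else 0) =
        (\<Sum>a\<le>1. \<Sum>c\<le>1. f a c 1 * f (1 - a) (1 - c) 1)"
    using cm_eq[OF cm, of 1 1 1 1] n by simp
  then show ?thesis using True m cm_001[OF cm n] cm_beta[OF cm n al]
    by (simp add: atMost_Suc numeral_2_eq_2)
next
  case False
  then show ?thesis using cm_van[OF cm n, of m i j] i j m by auto
qed

lemma cm_vals:
  assumes cm: "coalg_morph n (f::('a::field) sc)" and n: "2 \<le> n"
  shows "f 0 0 0 = 1" "f 1 0 0 = 0" "f 0 1 0 = 0" "f 1 1 0 = 0"
  using cm_0[OF cm, of 0 0] cm_0[OF cm, of 1 0] cm_0[OF cm, of 0 1] cm_0[OF cm, of 1 1] n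
  by auto

theorem proposition2p2:
  fixes p d :: "('a::field_char_0) sc" and n :: nat
  assumes "alg_closed_field TYPE('a)"
    and "n \<ge> 2"
    and "regular_q_cycle n p d"
  shows "(d 1 0 1 = 1 \<and> p 1 0 1 = 1) \<or> (d 1 1 1 = 0 \<and> p 1 1 1 = 0)"
proof -
  have n: "2 \<le> n" using assms(2) .
  have cp: "coalg_morph n p" and cd: "coalg_morph n d"
    using assms(3) unfolding regular_q_cycle_def regular_q_magma_def by auto
  obtain u v where cu: "coalg_morph n u" and cv: "coalg_morph n v" and
    reg: "\<forall>i<n. \<forall>j<n. \<forall>k<n.
          (\<Sum>s\<le>j. \<Sum>m<n. u i s m * p m (j - s) k) = (if j = 0 \<and> i = k then 1 else 0) \<and>
          (\<Sum>s\<le>j. \<Sum>m<n. p i s m * u m (j - s) k) = (if j = 0 \<and> i = k then 1 else 0) \<and>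
          (\<Sum>s\<le>j. \<Sum>m<n. d i (j - s) m * v m s k) = (if j = 0 \<and> i = k then 1 else 0) \<and>
          (\<Sum>s\<le>j. \<Sum>m<n. v i (j - s) m * d m s k) = (if j = 0 \<and> i = k then 1 else 0)"
    using assms(3) unfolding regular_q_cycle_def regular_q_magma_def by blast
  have cyc: "\<forall>i<n. \<forall>j<n. \<forall>l<n. \<forall>k<n.
        (\<Sum>s\<le>j. \<Sum>m<n. \<Sum>r<n. p i s m * d l (j - s) r * p m r k) =
        (\<Sum>s\<le>l. \<Sum>m<n. \<Sum>r<n. p i (l - s) m * p j s r * p m r k) \<and>
        (\<Sum>s\<le>j. \<Sum>m<n. \<Sum>r<n. p i s m * p l (j - s) r * d m r k) =
        (\<Sum>s\<le>l. \<Sum>m<n. \<Sum>r<n. d i (l - s) m * d j s r * p m r k) \<and>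
        (\<Sum>s\<le>j. \<Sum>m<n. \<Sum>r<n. d i s m * d l (j - s) r * d m r k) =
        (\<Sum>s\<le>l. \<Sum>m<n. \<Sum>r<n. d i (l - s) m * p j s r * d m r k)"
    using assms(3) unfolding regular_q_cycle_def by blast
  have r1: "(\<Sum>m<n. p 1 0 m * u m 0 1) = 1" and r2: "(\<Sum>m<n. d 1 0 m * v m 0 1) = 1"
    using reg[rule_format, of 1 0 1] n by auto
  have "p 1 0 m = 0" if "m < n" "m \<noteq> 1" for m
    using cm_van[OF cp n, of m 1 0] cm_vals[OF cp n] that by (cases "m = 0") auto
  then have "(\<Sum>m<n. p 1 0 m * u m 0 1) = p 1 0 1 * u 1 0 1"
    using n by (intro sum_one_pt) auto
  then have ap: "p 1 0 1 \<noteq> 0" using r1 by auto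
  have "d 1 0 m = 0" if "m < n" "m \<noteq> 1" for m
    using cm_van[OF cd n, of m 1 0] cm_vals[OF cd n] that by (cases "m = 0") auto
  then have "(\<Sum>m<n. d 1 0 m * v m 0 1) = d 1 0 1 * v 1 0 1"
    using n by (intro sum_one_pt) auto
  then have ad: "d 1 0 1 \<noteq> 0" using r2 by auto
  note Zp = cm_Z[OF cp n ap] and Zd = cm_Z[OF cd n ad]
  note vals = cm_vals[OF cp n] cm_vals[OF cd n] cm_001[OF cp n] cm_001[OF cd n]
    cm_beta[OF cp n ap] cm_beta[OF cd n ad]
  note vals' = vals[unfolded One_nat_def]
  have e1: "(\<Sum>s\<le>1. \<Sum>m<n. \<Sum>r<n. p 1 s m * d 0 (1 - s) r * p m r 1) =
        (\<Sum>s\<le>0. \<Sum>m<n. \<Sum>r<n. p 1 (0 - s) m * p 1 s r * p m r 1)"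
    using cyc[rule_format, of 1 1 0 1] n by auto
  have E1: "p 1 1 1 = 0 \<or> p 1 0 1 = 1"
    using e1 ap ad by (simp add: sum_lt2[OF n] Zp Zd vals vals' atMost_Suc One_nat_def)
  have e2: "(\<Sum>s\<le>1. \<Sum>m<n. \<Sum>r<n. p 1 s m * p 0 (1 - s) r * d m r 1) =
        (\<Sum>s\<le>0. \<Sum>m<n. \<Sum>r<n. d 1 (0 - s) m * d 1 s r * p m r 1)"
    using cyc[rule_format, of 1 1 0 1] n by auto
  have E2: "p 1 1 1 = 0 \<or> d 1 0 1 = 1"
    using e2 ap ad by (simp add: sum_lt2[OF n] Zp Zd vals vals' atMost_Suc One_nat_def)
  have e3: "(\<Sum>s\<le>1. \<Sum>m<n. \<Sum>r<n. d 1 s m * d 0 (1 - s) r * d m r 1) =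
        (\<Sum>s\<le>0. \<Sum>m<n. \<Sum>r<n. d 1 (0 - s) m * p 1 s r * d m r 1)"
    using cyc[rule_format, of 1 1 0 1] n by auto
  have E3: "d 1 1 1 = 0 \<or> p 1 0 1 = 1"
    using e3 ap ad by (simp add: sum_lt2[OF n] Zp Zd vals vals' atMost_Suc One_nat_def)
  have e4: "(\<Sum>s\<le>0. \<Sum>m<n. \<Sum>r<n. d 1 s m * d 1 (0 - s) r * d m r 1) =
        (\<Sum>s\<le>1. \<Sum>m<n. \<Sum>r<n. d 1 (1 - s) m * p 0 s r * d m r 1)"
    using cyc[rule_format, of 1 0 1 1] n by auto
  have E4: "d 1 1 1 = 0 \<or> d 1 0 1 = 1"
    using e4 ap ad by (simp add: sum_lt2[OF n] Zp Zd vals vals' atMost_Suc One_nat_def)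
  show ?thesis using E1 E2 E3 E4 by auto
qed

end
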